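(* Let $R$ be a Prüfer domain and $n\ge 1$. Then every $n$-absorbing ideal of $R$ is strongly $n$-absorbing.
   Context: A Prüfer domain is an integral domain in which every nonzero finitely generated ideal is invertible. An ideal $I$ of $R$ is $n$-absorbing if whenever $x_1,\dots,x_{n+1}\in R$ and $x_1x_2\cdots x_{n+1}\in I$, the product of some $n$ of the $x_i$'s lies in $I$. An ideal $I$ of $R$ is strongly $n$-absorbing if whenever $I_1,\dots,I_{n+1}$ are ideals of $R$ with $I_1I_2\cdots I_{n+1}\subseteq I$, the product of some $n$ of the $I_j$'s is contained in $I$. *)

theory Defs
  imports "HOL-Computational_Algebra.Fraction_Field"
begin

text \<open>Ideals of a commutative ring (type-class idiom; the ring is the whole type).\<close>
definition is_ideal :: "'a::comm_ring_1 set \<Rightarrow> bool" where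
  "is_ideal I \<longleftrightarrow> 0 \<in> I \<and> (\<forall>x\<in>I. \<forall>y\<in>I. x + y \<in> I) \<and> (\<forall>r x. x \<in> I \<longrightarrow> r * x \<in> I)"

definition ideal_gen :: "'a::comm_ring_1 set \<Rightarrow> 'a set" where
  "ideal_gen S = \<Inter>{J. is_ideal J \<and> S \<subseteq> J}"

definition fin_gen_ideal :: "'a::comm_ring_1 set \<Rightarrow> bool" where
  "fin_gen_ideal I \<longleftrightarrow> (\<exists>S. finite S \<and> I = ideal_gen S)"

definition ideal_prod :: "(nat \<Rightarrow> 'a::comm_ring_1 set) \<Rightarrow> nat set \<Rightarrow> 'a set" where
  "ideal_prod Is A = ideal_gen {\<Prod>i\<in>A. x i | x. \<forall>i\<in>A. x i \<in> Is i}"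

text \<open>Fractional ideals live in the fraction field 'a fract; R is embedded via Fract r 1.\<close>
definition R_submodule :: "'a::idom fract set \<Rightarrow> bool" where
  "R_submodule J \<longleftrightarrow> 0 \<in> J \<and> (\<forall>x\<in>J. \<forall>y\<in>J. x + y \<in> J) \<and> (\<forall>r x. x \<in> J \<longrightarrow> Fract r 1 * x \<in> J)"

definition frac_mult :: "'a::idom set \<Rightarrow> 'a fract set \<Rightarrow> 'a fract set" where
  "frac_mult I J = {\<Sum>i<m. Fract (a i) 1 * b i | (m::nat) (a::nat \<Rightarrow> 'a) (b::nat \<Rightarrow> 'a fract). \<forall>i<m. a i \<in> I \<and> b i \<in> J}"

definition invertible_ideal :: "'a::idom set \<Rightarrow> bool" where
  "invertible_ideal I \<longleftrightarrow> (\<exists>J. R_submodule J \<and> frac_mult I J = range (\<lambda>r. Fract r 1))"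

definition pruefer_domain :: "'a::idom itself \<Rightarrow> bool" where
  "pruefer_domain _ \<longleftrightarrow> (\<forall>I::'a set. is_ideal I \<and> I \<noteq> {0} \<and> fin_gen_ideal I \<longrightarrow> invertible_ideal I)"

definition n_absorbing :: "nat \<Rightarrow> 'a::comm_ring_1 set \<Rightarrow> bool" where
  "n_absorbing n I \<longleftrightarrow> is_ideal I \<and>
     (\<forall>x :: nat \<Rightarrow> 'a. (\<Prod>i\<le>n. x i) \<in> I \<longrightarrow> (\<exists>j\<le>n. (\<Prod>i\<in>{..n} - {j}. x i) \<in> I))"

definition strongly_n_absorbing :: "nat \<Rightarrow> 'a::comm_ring_1 set \<Rightarrow> bool" where
  "strongly_n_absorbing n I \<longleftrightarrow> is_ideal I \<and>
     (\<forall>Is :: nat \<Rightarrow> 'a set. (\<forall>i\<le>n. is_ideal (Is i)) \<longrightarrow> ideal_prod Is {..n} \<subseteq> I \<longrightarrow>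
        (\<exists>j\<le>n. ideal_prod Is ({..n} - {j}) \<subseteq> I))"

end

theory Submission
  imports Defs
begin

lemma idl_0: "is_ideal I \<Longrightarrow> 0 \<in> I" by (simp add: is_ideal_def)
lemma idl_add: "is_ideal I \<Longrightarrow> x \<in> I \<Longrightarrow> y \<in> I \<Longrightarrow> x + y \<in> I" by (simp add: is_ideal_def)
lemma idl_multl: "is_ideal I \<Longrightarrow> x \<in> I \<Longrightarrow> r * x \<in> I" by (simp add: is_ideal_def)
lemma idl_multr: "is_ideal I \<Longrightarrow> x \<in> I \<Longrightarrow> x * r \<in> I"
  using idl_multl[of I x r] by (simp add: mult.commute)
lemma idl_neg: "is_ideal I \<Longrightarrow> x \<in> I \<Longrightarrow> - x \<in> I"
  using idl_multl[of I x "-1"] by simp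
lemma idl_diff: "is_ideal I \<Longrightarrow> x \<in> I \<Longrightarrow> y \<in> I \<Longrightarrow> x - y \<in> I"
  using idl_add[of I x "-y"] idl_neg[of I y] by simp
lemma idl_sum: "is_ideal I \<Longrightarrow> (\<And>i. i \<in> A \<Longrightarrow> f i \<in> I) \<Longrightarrow> sum f A \<in> I"
  by (induction A rule: infinite_finite_induct) (auto intro: idl_0 idl_add)

lemma gen_sub: "S \<subseteq> ideal_gen S" unfolding ideal_gen_def by blast
lemma gen_min: "is_ideal J \<Longrightarrow> S \<subseteq> J \<Longrightarrow> ideal_gen S \<subseteq> J" unfolding ideal_gen_def by blast
lemma gen_ideal: "is_ideal (ideal_gen S)"
  unfolding is_ideal_def ideal_gen_def by (simp add: is_ideal_def)

definition maxi :: "'a::comm_ring_1 set \<Rightarrow> bool" where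
  "maxi M \<longleftrightarrow> is_ideal M \<and> 1 \<notin> M \<and> (\<forall>K. is_ideal K \<and> M \<subseteq> K \<and> 1 \<notin> K \<longrightarrow> K = M)"

lemma inK: fixes a :: "'a::comm_ring_1" shows "m \<in> M \<Longrightarrow> x = m + c * a \<Longrightarrow> x \<in> {x. \<exists>m c. m \<in> M \<and> x = m + c * a}"
  by blast

lemma maxi_prime:
  fixes M :: "'a::comm_ring_1 set"
  assumes "maxi M" "a * b \<in> M" "a \<notin> M" shows "b \<in> M"
proof (rule ccontr)
  assume nb: "b \<notin> M"
  have iM: "is_ideal M" using assms(1) by (simp add: maxi_def)
  define K where "K = {x. \<exists>m c. m \<in> M \<and> x = m + c * a}"
  have "is_ideal K" unfolding is_ideal_def K_def
  proof (intro conjI ballI allI impI)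
    show "0 \<in> {x. \<exists>m c. m \<in> M \<and> x = m + c * a}"
      by (rule inK[where m=0 and c=0]) (simp_all add: idl_0[OF iM])
  next
    fix x y assume "x \<in> {x. \<exists>m c. m \<in> M \<and> x = m + c * a}" "y \<in> {x. \<exists>m c. m \<in> M \<and> x = m + c * a}"
    then obtain m1 r1 m2 r2 where h: "x = m1 + r1 * a" "y = m2 + r2 * a" "m1 \<in> M" "m2 \<in> M" by blast
    show "x + y \<in> {x. \<exists>m c. m \<in> M \<and> x = m + c * a}"
      by (rule inK[where m="m1+m2" and c="r1+r2"]) (use h in \<open>auto simp: algebra_simps idl_add[OF iM]\<close>)
  next
    fix r x assume "x \<in> {x. \<exists>m c. m \<in> M \<and> x = m + c * a}"
    then obtain m1 r1 where h: "x = m1 + r1 * a" "m1 \<in> M" by blast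
    show "r * x \<in> {x. \<exists>m c. m \<in> M \<and> x = m + c * a}"
      by (rule inK[where m="r*m1" and c="r*r1"]) (use h in \<open>auto simp: algebra_simps idl_multl[OF iM] idl_multr[OF iM]\<close>)
  qed
  moreover have "M \<subseteq> K"
  proof
    fix x assume "x \<in> M" show "x \<in> K" unfolding K_def
      by (rule inK[where m=x and c=0]) (simp_all add: \<open>x \<in> M\<close>)
  qed
  moreover have "a \<in> K" unfolding K_def
    by (rule inK[where m=0 and c=1]) (simp_all add: idl_0[OF iM])
  ultimately have "1 \<in> K" using assms(1,3) unfolding maxi_def by blast
  then obtain m r where "1 = m + r * a" "m \<in> M" unfolding K_def by blast
  then have "b = m * b + r * (a * b)"
    by (metis mult_1 distrib_right mult.assoc mult.left_commute)
  moreover have "m * b + r * (a * b) \<in> M"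
    using idl_add[OF iM] idl_multr[OF iM] idl_multl[OF iM] \<open>m \<in> M\<close> assms(2) by blast
  ultimately show False using nb by simp
qed

lemma maxi_prod_notin:
  fixes M :: "'a::comm_ring_1 set"
  assumes "maxi M" "finite A" "\<And>i. i \<in> A \<Longrightarrow> f i \<notin> M"
  shows "prod f A \<notin> M"
  using assms(2,3)
proof (induction A rule: finite_induct)
  case empty then show ?case using assms(1) by (simp add: maxi_def)
next
  case (insert x F) then show ?case using maxi_prime[OF assms(1)] by auto
qed

lemma exists_maxi:
  fixes K :: "'a::comm_ring_1 set"
  assumes "is_ideal K" "1 \<notin> K" shows "\<exists>M. maxi M \<and> K \<subseteq> M"
proof -
  define A where "A = {J. is_ideal J \<and> K \<subseteq> J \<and> 1 \<notin> J}"
  have "\<exists>M\<in>A. \<forall>X\<in>A. M \<subseteq> X \<longrightarrow> X = M"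
  proof (rule subset_Zorn_nonempty)
    show "A \<noteq> {}" using assms A_def by blast
  next
    fix C assume ne: "C \<noteq> {}" and ch: "subset.chain A C"
    then have CA: "C \<subseteq> A" and lin: "\<forall>X\<in>C. \<forall>Y\<in>C. X \<subseteq> Y \<or> Y \<subseteq> X"
      by (auto simp: subset_chain_def)
    have "is_ideal (\<Union>C)" unfolding is_ideal_def
    proof (intro conjI ballI allI impI)
      show "0 \<in> \<Union>C" using ne CA by (auto simp: A_def is_ideal_def)
    next
      fix x y assume "x \<in> \<Union>C" "y \<in> \<Union>C"
      then obtain X Y where "X \<in> C" "Y \<in> C" "x \<in> X" "y \<in> Y" by blast
      with lin have "x \<in> X \<union> Y \<and> y \<in> X \<union> Y \<and> (X \<union> Y = X \<or> X \<union> Y = Y)" by blast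
      then show "x + y \<in> \<Union>C" using CA \<open>X \<in> C\<close> \<open>Y \<in> C\<close> unfolding A_def
        by (metis (no_types, lifting) UnionI idl_add mem_Collect_eq subsetD)
    next
      fix r x assume "x \<in> \<Union>C"
      then obtain X where "X \<in> C" "x \<in> X" by blast
      then show "r * x \<in> \<Union>C" using CA unfolding A_def by (auto intro: idl_multl)
    qed
    moreover have "K \<subseteq> \<Union>C" using ne CA A_def by blast
    moreover have "1 \<notin> \<Union>C" using CA A_def by blast
    ultimately show "\<Union>C \<in> A" unfolding A_def by blast
  qed
  then obtain M where "M \<in> A" "\<forall>X\<in>A. M \<subseteq> X \<longrightarrow> X = M" by blast
  then show ?thesis unfolding maxi_def A_def by blast
qed


lemma fract_add: "Fract ((x::'a::idom) + y) 1 = Fract x 1 + Fract y 1"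
  by simp

lemma fract_sum: fixes m :: nat shows "Fract (\<Sum>i<m. f i) 1 = (\<Sum>i<m. Fract (f i) (1::'a::idom))"
  by (induction m) (simp_all add: Zero_fract_def fract_add)

lemma fract_inj: "Fract (x::'a::idom) 1 = Fract y 1 \<longleftrightarrow> x = y"
  by (simp add: eq_fract)

lemma inv_partition:
  fixes J :: "'a::idom set"
  assumes "invertible_ideal J"
  shows "\<exists>(k::nat) a t. (\<forall>m<k. a m \<in> J) \<and> (\<Sum>m<k. t m) = 1 \<and> (\<forall>m<k. \<forall>b\<in>J. \<exists>r. t m * b = a m * r)"
proof -
  obtain J' where eq: "frac_mult J J' = range (\<lambda>r. Fract r 1)"
    using assms unfolding invertible_ideal_def by blast
  have single: "\<exists>g. Fract c 1 * d = Fract g 1" if "c \<in> J" "d \<in> J'" for c d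
  proof -
    have "Fract c 1 * d \<in> frac_mult J J'" unfolding frac_mult_def
      apply (rule CollectI)
      apply (rule exI[of _ 1], rule exI[of _ "\<lambda>_. c"], rule exI[of _ "\<lambda>_. d"])
      using that by simp
    then show ?thesis using eq by auto
  qed
  have "(1::'a fract) \<in> range (\<lambda>r. Fract r 1)" unfolding One_fract_def by (rule rangeI)
  then have "(1::'a fract) \<in> frac_mult J J'" using eq by simp
  then have "\<exists>(k::nat) a b. 1 = (\<Sum>i<k. Fract (a i) 1 * b i) \<and> (\<forall>i<k. a i \<in> J \<and> b i \<in> J')"
    unfolding frac_mult_def by (simp only: mem_Collect_eq)
  then obtain k :: nat and a b where one: "1 = (\<Sum>i<k. Fract (a i) 1 * b i)" and ab: "\<forall>i<k. a i \<in> J \<and> b i \<in> J'"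
    by blast
  define t where "t i = (SOME g. Fract (a i) 1 * b i = Fract g 1)" for i
  have t: "Fract (a i) 1 * b i = Fract (t i) 1" if "i<k" for i
    unfolding t_def by (rule someI_ex) (use single[of "a i" "b i"] ab that in blast)
  have "Fract (\<Sum>i<k. t i) 1 = (\<Sum>i<k. Fract (t i) 1)" by (rule fract_sum)
  also have "\<dots> = (\<Sum>i<k. Fract (a i) 1 * b i)" using t by (intro sum.cong) auto
  also have "\<dots> = Fract 1 1" using one One_fract_def by simp
  finally have "Fract (\<Sum>i<k. t i) 1 = Fract 1 1" .
  then have s1: "(\<Sum>i<k. t i) = 1" by (simp add: fract_inj)
  have loc: "\<exists>r. t m * c = a m * r" if lk: "m < k" "c \<in> J" for m c
  proof -
    obtain g where g: "Fract c 1 * b m = Fract g 1" using single[of c "b m"] ab lk by blast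
    have "Fract (t m * c) 1 = Fract (t m) 1 * Fract c 1" by simp
    also have "\<dots> = (Fract (a m) 1 * b m) * Fract c 1" using t lk by simp
    also have "\<dots> = Fract (a m) 1 * (Fract c 1 * b m)" by (simp add: ac_simps)
    also have "\<dots> = Fract (a m * g) 1" using g by simp
    finally show ?thesis by (simp add: fract_inj)
  qed
  show ?thesis using ab s1 loc by blast
qed


lemma maxi_distinct:
  assumes "maxi M" "maxi M'" "M' \<noteq> M" shows "\<exists>p. p \<in> M' \<and> p \<notin> M"
proof (rule ccontr)
  assume "\<not> ?thesis" then have "M' \<subseteq> M" by blast
  then have "M = M'" using assms(1,2) unfolding maxi_def by blast
  then show False using assms(3) by blast
qed

lemma local_gen:
  fixes J :: "'a::idom set" and L :: "'a set set" and k :: nat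
  assumes iJ: "is_ideal J" and aJ: "\<forall>m<k. a m \<in> J" and s1: "(\<Sum>m<k. t m) = 1"
    and loc: "\<forall>m<k. \<forall>b\<in>J. \<exists>r. t m * b = a m * r"
    and fL: "finite L" and mL: "\<forall>M\<in>L. maxi M"
  shows "\<exists>x\<in>J. \<forall>M\<in>L. \<exists>s. s \<notin> M \<and> (\<forall>b\<in>J. \<exists>r. s * b = x * r)"
proof -
  have "\<exists>m<k. t m \<notin> M" if "M \<in> L" for M
  proof (rule ccontr)
    assume "\<not> ?thesis"
    moreover have "is_ideal M" using mL that by (simp add: maxi_def)
    ultimately have "(\<Sum>m<k. t m) \<in> M" by (intro idl_sum) auto
    then show False using s1 mL that by (simp add: maxi_def)
  qed
  then obtain mm where mm: "\<forall>M\<in>L. mm M < k \<and> t (mm M) \<notin> M" by metis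
  have "\<exists>e. e \<notin> M \<and> (\<forall>M'\<in>L-{M}. e \<in> M')" if HM: "M \<in> L" for M
  proof -
    have "\<exists>p. p \<in> M' \<and> p \<notin> M" if "M' \<in> L - {M}" for M'
      using maxi_distinct[of M M'] mL HM that by blast
    then obtain p where p: "\<forall>M'\<in>L-{M}. p M' \<in> M' \<and> p M' \<notin> M" by metis
    have "prod p (L-{M}) \<notin> M"
      using maxi_prod_notin[of M "L-{M}" p] mL HM fL p by blast
    moreover have "prod p (L-{M}) \<in> M'" if "M' \<in> L-{M}" for M'
    proof -
      have "prod p (L-{M}) = p M' * prod p (L-{M}-{M'})"
        using prod.remove[of "L-{M}" M' p] fL that by simp
      moreover have "is_ideal M'" using mL that by (simp add: maxi_def)
      ultimately show ?thesis using p that idl_multr by metis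
    qed
    ultimately show ?thesis by blast
  qed
  then obtain ep where ep: "\<forall>M\<in>L. ep M \<notin> M \<and> (\<forall>M'\<in>L-{M}. ep M \<in> M')" by metis
  define x where "x = (\<Sum>M\<in>L. ep M * t (mm M) * a (mm M))"
  have xJ: "x \<in> J" unfolding x_def using aJ mm by (intro idl_sum[OF iJ]) (auto intro: idl_multl[OF iJ])
  have "\<exists>s. s \<notin> M \<and> (\<forall>b\<in>J. \<exists>r. s * b = x * r)" if HM: "M \<in> L" for M
  proof -
    define m where "m = mm M"
    have mk: "m < k" and tm: "t m \<notin> M" using mm HM m_def by auto
    have iM: "is_ideal M" and mM: "maxi M" using mL HM by (auto simp: maxi_def)
    show ?thesis
    proof (cases "a m = 0")
      case True
      show ?thesis
      proof (rule exI[of _ "t m"], intro conjI ballI)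
        show "t m \<notin> M" by fact
        fix c assume "c \<in> J"
        then obtain r where "t m * c = a m * r" using loc mk by blast
        then show "\<exists>r. t m * c = x * r" using True by (intro exI[of _ 0]) simp
      qed
    next
      case False
      have "\<exists>r. t m * a (mm M') = a m * r" if "M' \<in> L" for M'
        using loc mk aJ mm that by blast
      then obtain rr where rr: "\<forall>M'\<in>L. t m * a (mm M') = a m * rr M'" by metis
      have "a m * t m = a m * rr M" using rr HM m_def by (metis mult.commute)
      then have rrM: "rr M = t m" using False by simp
      define w where "w = (\<Sum>M'\<in>L. ep M' * t (mm M') * rr M')"
      have trm: "t m * (ep M' * t (mm M') * a (mm M')) = a m * (ep M' * t (mm M') * rr M')"
        if "M' \<in> L" for M'
      proof -
        have "t m * (ep M' * t (mm M') * a (mm M')) = ep M' * t (mm M') * (t m * a (mm M'))"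
          by (simp add: ac_simps)
        also have "\<dots> = ep M' * t (mm M') * (a m * rr M')" using rr that by simp
        also have "\<dots> = a m * (ep M' * t (mm M') * rr M')" by (simp add: ac_simps)
        finally show ?thesis .
      qed
      have tx: "t m * x = a m * w"
        unfolding x_def w_def sum_distrib_left by (rule sum.cong[OF refl], rule trm)
      have wM: "w \<notin> M"
      proof
        assume wIn: "w \<in> M"
        have rest: "(\<Sum>M'\<in>L-{M}. ep M' * t (mm M') * rr M') \<in> M"
        proof (intro idl_sum[OF iM])
          fix M' assume "M' \<in> L - {M}"
          then have "ep M' \<in> M" using ep HM by auto
          then show "ep M' * t (mm M') * rr M' \<in> M" using idl_multr[OF iM] by blast
        qed
        have "w = ep M * t m * t m + (\<Sum>M'\<in>L-{M}. ep M' * t (mm M') * rr M')"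
          unfolding w_def using sum.remove[OF fL HM, of "\<lambda>M'. ep M' * t (mm M') * rr M'"] rrM m_def
          by simp
        then have "ep M * t m * t m = w - (\<Sum>M'\<in>L-{M}. ep M' * t (mm M') * rr M')" by simp
        then have "ep M * t m * t m \<in> M" using wIn rest idl_diff[OF iM] by metis
        then have "ep M * t m \<in> M" using maxi_prime[OF mM, of "ep M * t m" "t m"] tm by (metis mult.commute)
        then show False using maxi_prime[OF mM, of "t m" "ep M"] tm ep HM by (metis mult.commute)
      qed
      show ?thesis
      proof (rule exI[of _ "w * t m"], intro conjI ballI)
        show "w * t m \<notin> M" using maxi_prime[OF mM, of w "t m"] wM tm by blast
        fix c assume "c \<in> J"
        then obtain g where g: "t m * c = a m * g" using loc mk by blast
        have "w * t m * c = w * (a m * g)" using g by (simp add: ac_simps)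
        also have "\<dots> = (a m * w) * g" by (simp add: ac_simps)
        also have "\<dots> = x * (t m * g)" using tx by (simp add: ac_simps)
        finally show "\<exists>r. w * t m * c = x * r" by blast
      qed
    qed
  qed
  then show ?thesis using xJ by blast
qed


theorem corollary1:
  fixes I :: "'a::idom set" and n :: nat
  assumes "pruefer_domain TYPE('a)" and "n \<ge> 1" and "n_absorbing n I"
  shows "strongly_n_absorbing n I"
proof -
  note pr = assms(1) and n1 = assms(2) and na = assms(3)
  have iI: "is_ideal I" using na by (simp add: n_absorbing_def)
  have absb: "\<And>x. (\<Prod>i\<le>n. x i) \<in> I \<Longrightarrow> \<exists>j\<le>n. (\<Prod>i\<in>{..n}-{j}. x i) \<in> I"
    using na by (simp add: n_absorbing_def)
  have inv: "\<And>K::'a set. is_ideal K \<Longrightarrow> K \<noteq> {0} \<Longrightarrow> fin_gen_ideal K \<Longrightarrow> invertible_ideal K"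
    using pr by (simp add: pruefer_domain_def)
  show ?thesis unfolding strongly_n_absorbing_def
  proof (intro conjI allI impI)
    show "is_ideal I" by (rule iI)
  next
    fix Is :: "nat \<Rightarrow> 'a set"
    assume iIs: "\<forall>i\<le>n. is_ideal (Is i)" and sub: "ideal_prod Is {..n} \<subseteq> I"
    show "\<exists>j\<le>n. ideal_prod Is ({..n}-{j}) \<subseteq> I"
    proof (rule ccontr)
      assume "\<not> ?thesis"
      then have nsub: "\<forall>j\<le>n. \<not> ideal_prod Is ({..n}-{j}) \<subseteq> I" by blast
      have "\<exists>z. (\<forall>i\<in>{..n}-{j}. z i \<in> Is i) \<and> (\<Prod>i\<in>{..n}-{j}. z i) \<notin> I" if jn: "j \<le> n" for j
      proof (rule ccontr)
        assume "\<not> ?thesis"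
        then have "{\<Prod>i\<in>{..n}-{j}. x i | x. \<forall>i\<in>{..n}-{j}. x i \<in> Is i} \<subseteq> I" by blast
        then have "ideal_prod Is ({..n}-{j}) \<subseteq> I" unfolding ideal_prod_def by (rule gen_min[OF iI])
        then show False using nsub jn by blast
      qed
      then obtain z where z: "\<forall>j\<le>n. (\<forall>i\<in>{..n}-{j}. z j i \<in> Is i) \<and> (\<Prod>i\<in>{..n}-{j}. z j i) \<notin> I"
        by metis
      define y where "y j = (\<Prod>i\<in>{..n}-{j}. z j i)" for j
      define Q where "Q j = {r. r * y j \<in> I}" for j
      have Qi: "is_ideal (Q j)" for j
        unfolding is_ideal_def
      proof (intro conjI ballI allI impI)
        show "0 \<in> Q j" unfolding Q_def using idl_0[OF iI] by simp
      next
        fix u v assume "u \<in> Q j" "v \<in> Q j"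
        then show "u + v \<in> Q j" unfolding Q_def using idl_add[OF iI] by (simp add: distrib_right)
      next
        fix r u assume "u \<in> Q j"
        then show "r * u \<in> Q j" unfolding Q_def using idl_multl[OF iI] by (simp add: mult.assoc)
      qed
      have "\<exists>M. maxi M \<and> Q j \<subseteq> M" if "j \<le> n" for j
      proof (rule exists_maxi[OF Qi])
        show "1 \<notin> Q j" unfolding Q_def y_def using z that by simp
      qed
      then obtain MM where MM: "\<forall>j\<le>n. maxi (MM j) \<and> Q j \<subseteq> MM j" by metis
      define L where "L = MM ` {..n}"
      have fL: "finite L" and mL: "\<forall>M\<in>L. maxi M" by (auto simp: L_def MM)
      define JJ where "JJ i = ideal_gen ((\<lambda>j. z j i) ` ({..n}-{i}))" for i
      have JJsub: "JJ i \<subseteq> Is i" if "i \<le> n" for i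
        unfolding JJ_def
      proof (rule gen_min)
        show "is_ideal (Is i)" using iIs that by blast
        show "(\<lambda>j. z j i) ` ({..n} - {i}) \<subseteq> Is i" using z that by auto
      qed
      have zJJ: "z j i \<in> JJ i" if "j \<le> n" "i \<noteq> j" for i j
        unfolding JJ_def using that gen_sub by fastforce
      have znz: "z j i \<noteq> 0" if "j \<le> n" "i \<le> n" "i \<noteq> j" for i j
      proof
        assume "z j i = 0"
        then have "(\<Prod>i\<in>{..n}-{j}. z j i) = 0" using that by (intro prod_zero) auto
        then show False using z that idl_0[OF iI] by metis
      qed
      have exx: "\<exists>x\<in>JJ i. \<forall>M\<in>L. \<exists>s. s \<notin> M \<and> (\<forall>b\<in>JJ i. \<exists>r. s * b = x * r)" if iN: "i \<le> n" for i
      proof -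
        define j where "j = (if i = 0 then 1 else 0::nat)"
        have "j \<le> n" "i \<noteq> j" using n1 j_def by auto
        then have "z j i \<in> JJ i" "z j i \<noteq> 0" using zJJ znz iN by auto
        then have nz: "JJ i \<noteq> {0}" by blast
        have fg: "fin_gen_ideal (JJ i)" unfolding fin_gen_ideal_def JJ_def
          by (rule exI[of _ "(\<lambda>j. z j i) ` ({..n}-{i})"]) simp
        have iJJ: "is_ideal (JJ i)" unfolding JJ_def by (rule gen_ideal)
        have "invertible_ideal (JJ i)" by (rule inv[OF iJJ nz fg])
        then obtain k :: nat and a t where
          p: "\<forall>m<k. a m \<in> JJ i" "(\<Sum>m<k. t m) = 1" "\<forall>m<k. \<forall>b\<in>JJ i. \<exists>r. t m * b = a m * r"
          using inv_partition by blast
        show ?thesis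
          by (rule local_gen[OF iJJ p fL mL])
      qed
      define x where "x i = (SOME x. x \<in> JJ i \<and> (\<forall>M\<in>L. \<exists>s. s \<notin> M \<and> (\<forall>b\<in>JJ i. \<exists>r. s * b = x * r)))" for i
      have x: "x i \<in> JJ i \<and> (\<forall>M\<in>L. \<exists>s. s \<notin> M \<and> (\<forall>b\<in>JJ i. \<exists>r. s * b = x i * r))"
        if "i \<le> n" for i
        unfolding x_def by (rule someI_ex) (use exx[OF that] in blast)
      have xIs: "\<forall>i\<in>{..n}. x i \<in> Is i" using x JJsub by blast
      have "(\<Prod>i\<le>n. x i) \<in> {\<Prod>i\<in>{..n}. w i | w. \<forall>i\<in>{..n}. w i \<in> Is i}"
        using xIs by blast
      then have "(\<Prod>i\<le>n. x i) \<in> ideal_prod Is {..n}" unfolding ideal_prod_def by (rule subsetD[OF gen_sub])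
      then have "(\<Prod>i\<le>n. x i) \<in> I" using sub by (rule subsetD[rotated])
      then obtain j where jn: "j \<le> n" and jI: "(\<Prod>i\<in>{..n}-{j}. x i) \<in> I" using absb by blast
      have HMj: "MM j \<in> L" using jn L_def by blast
      have "\<exists>s r. s \<notin> MM j \<and> s * z j i = x i * r" if "i \<in> {..n}-{j}" for i
      proof -
        have "i \<le> n" "i \<noteq> j" using that by auto
        then have "z j i \<in> JJ i" using zJJ jn by blast
        then show ?thesis using x[OF \<open>i \<le> n\<close>] HMj by blast
      qed
      then obtain s r where sr: "\<forall>i\<in>{..n}-{j}. s i \<notin> MM j \<and> s i * z j i = x i * r i" by metis
      have "(\<Prod>i\<in>{..n}-{j}. s i) * y j = (\<Prod>i\<in>{..n}-{j}. x i) * (\<Prod>i\<in>{..n}-{j}. r i)"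
        unfolding y_def prod.distrib[symmetric] by (rule prod.cong) (simp_all add: sr)
      then have "(\<Prod>i\<in>{..n}-{j}. s i) * y j \<in> I" using jI idl_multr[OF iI] by metis
      then have "(\<Prod>i\<in>{..n}-{j}. s i) \<in> MM j" using MM jn unfolding Q_def by blast
      moreover have "(\<Prod>i\<in>{..n}-{j}. s i) \<notin> MM j"
        using maxi_prod_notin[of "MM j" "{..n}-{j}" s] MM jn sr by blast
      ultimately show False by blast
    qed
  qed
qed

end
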